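(* For any $0\le p\le n$, any $\eta,\mu\in\mathcal P(S_p)$ and any $f_n\in\mathrm{Osc}_1(S_n)$, there exist functions $\mathcal U_{p,n,\eta}(f_n),\mathcal V_{p,n,\eta}(f_n),\mathcal W_{p,n,\eta}(f_n)\in\mathrm{Osc}_1(S_p)$ whose values depend only on $(p,n,\eta)$ and $f_n$ (not on $\mu$), such that $$[\Phi_{p,n}(\mu)-\Phi_{p,n}(\eta)](f_n)=2q_{p,n}\beta(\mathcal P_{p,n})\,[\mu-\eta]\big(\mathcal U_{p,n,\eta}(f_n)\big)+\mathcal R_{p,n}(\mu,\eta)(f_n),$$ where $$|\mathcal R_{p,n}(\mu,\eta)(f_n)|\le 4q_{p,n}^3\beta(\mathcal P_{p,n})\,\big|[\mu-\eta](\mathcal V_{p,n,\eta}(f_n))\big|\,\big|[\mu-\eta](\mathcal W_{p,n,\eta}(f_n))\big|.$$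
   Context: Let $(S_n)_{n\ge0}$ be measurable spaces, $\mathcal M_n$ ($n\ge1$) Markov kernels from $S_{n-1}$ to $S_n$, and $\mathcal G_n:S_n\to(0,1)$ ($n\ge0$) measurable with $q_n:=\sup_{x,y}\mathcal G_n(x)/\mathcal G_n(y)<\infty$. Let $\mathcal Q_{p+1}(x,dy):=\mathcal G_p(x)\mathcal M_{p+1}(x,dy)$, $\mathcal Q_{p,n}:=\mathcal Q_{p+1}\mathcal Q_{p+2}\cdots\mathcal Q_n$ ($\mathcal Q_{n,n}=\mathrm{Id}$), $\mathcal P_{p,n}(f):=\mathcal Q_{p,n}(f)/\mathcal Q_{p,n}(1)$, and for $\mu\in\mathcal P(S_p)$, $\Phi_{p,n}(\mu)(f):=\mu(\mathcal Q_{p,n}f)/\mu(\mathcal Q_{p,n}1)$. Set $q_{p,n}:=\sup_{x,y\in S_p}\mathcal Q_{p,n}(1)(x)/\mathcal Q_{p,n}(1)(y)$ and $\beta(\mathcal P_{p,n}):=\sup_{f\in\mathrm{Osc}_1(S_n)}\mathrm{osc}(\mathcal P_{p,n}f)$, where $\mathrm{osc}(f)=\sup_{x,y}|f(x)-f(y)|$ and $\mathrm{Osc}_1(E)$ is the set of measurable functions on $E$ with oscillation at most $1$. *)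

theory Defs
  imports "HOL-Probability.Probability"
begin

text \<open>All state spaces S n are modelled as measurable spaces over one ambient type 'a.
  Functions on S n are real-valued functions 'a => real, considered on space (S n).\<close>

definition osc :: "'a measure \<Rightarrow> ('a \<Rightarrow> real) \<Rightarrow> real" where
  "osc E g = Sup {\<bar>g x - g y\<bar> | x y. x \<in> space E \<and> y \<in> space E}"

definition Osc1 :: "'a measure \<Rightarrow> ('a \<Rightarrow> real) set" where
  "Osc1 E = {f \<in> borel_measurable E. \<forall>x\<in>space E. \<forall>y\<in>space E. \<bar>f x - f y\<bar> \<le> 1}"

definition Qone :: "(nat \<Rightarrow> 'a \<Rightarrow> real) \<Rightarrow> (nat \<Rightarrow> 'a \<Rightarrow> 'a measure) \<Rightarrow> nat
    \<Rightarrow> ('a \<Rightarrow> real) \<Rightarrow> 'a \<Rightarrow> real" where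
  "Qone G M n f x = G (n - 1) x * (\<integral>y. f y \<partial>M n x)"

text \<open>Q_{p,n} = Q_{p+1} ... Q_n, with Q_{p,n} = Id for n <= p;
  recursively Q_{p,n} f = Q_{p,n-1}(Q_n f).\<close>
primrec Qpn :: "(nat \<Rightarrow> 'a \<Rightarrow> real) \<Rightarrow> (nat \<Rightarrow> 'a \<Rightarrow> 'a measure) \<Rightarrow> nat \<Rightarrow> nat
    \<Rightarrow> ('a \<Rightarrow> real) \<Rightarrow> 'a \<Rightarrow> real" where
  "Qpn G M p 0 f = f"
| "Qpn G M p (Suc n) f = (if Suc n \<le> p then f else Qpn G M p n (Qone G M (Suc n) f))"

definition Ppn :: "(nat \<Rightarrow> 'a \<Rightarrow> real) \<Rightarrow> (nat \<Rightarrow> 'a \<Rightarrow> 'a measure) \<Rightarrow> nat \<Rightarrow> nat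
    \<Rightarrow> ('a \<Rightarrow> real) \<Rightarrow> 'a \<Rightarrow> real" where
  "Ppn G M p n f x = Qpn G M p n f x / Qpn G M p n (\<lambda>_. 1) x"

definition Phi :: "(nat \<Rightarrow> 'a \<Rightarrow> real) \<Rightarrow> (nat \<Rightarrow> 'a \<Rightarrow> 'a measure) \<Rightarrow> nat \<Rightarrow> nat
    \<Rightarrow> 'a measure \<Rightarrow> ('a \<Rightarrow> real) \<Rightarrow> real" where
  "Phi G M p n \<mu> f = (\<integral>x. Qpn G M p n f x \<partial>\<mu>) / (\<integral>x. Qpn G M p n (\<lambda>_. 1) x \<partial>\<mu>)"

definition qpn :: "(nat \<Rightarrow> 'a measure) \<Rightarrow> (nat \<Rightarrow> 'a \<Rightarrow> real) \<Rightarrow> (nat \<Rightarrow> 'a \<Rightarrow> 'a measure)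
    \<Rightarrow> nat \<Rightarrow> nat \<Rightarrow> real" where
  "qpn S G M p n = Sup {Qpn G M p n (\<lambda>_. 1) x / Qpn G M p n (\<lambda>_. 1) y | x y.
       x \<in> space (S p) \<and> y \<in> space (S p)}"

definition beta :: "(nat \<Rightarrow> 'a measure) \<Rightarrow> (nat \<Rightarrow> 'a \<Rightarrow> real) \<Rightarrow> (nat \<Rightarrow> 'a \<Rightarrow> 'a measure)
    \<Rightarrow> nat \<Rightarrow> nat \<Rightarrow> real" where
  "beta S G M p n = Sup {osc (S p) (Ppn G M p n f) | f. f \<in> Osc1 (S n)}"

definition probs :: "'a measure \<Rightarrow> 'a measure set" where
  "probs E = {\<mu>. prob_space \<mu> \<and> sets \<mu> = sets E}"

end

theory Submission
  imports Defs
begin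

lemma kernel_x:
  assumes K: "L \<in> A \<rightarrow>\<^sub>M prob_algebra B" and x: "x \<in> space A"
  shows "prob_space (L x)" "sets (L x) = sets B" "space (L x) = space B"
proof -
  have "L x \<in> space (prob_algebra B)" using measurable_space[OF K x] .
  then show P: "prob_space (L x)" and Q: "sets (L x) = sets B" by (auto simp: space_prob_algebra)
  show "space (L x) = space B" using sets_eq_imp_space_eq[OF Q] .
qed

lemma bdd_integrable:
  fixes h :: "'a \<Rightarrow> real"
  assumes P: "prob_space N" and Q: "sets N = sets E" and hm: "h \<in> borel_measurable E"
    and hb: "\<forall>y\<in>space E. \<bar>h y\<bar> \<le> B"
  shows "integrable N h"
proof -
  interpret prob_space N by (rule P)
  have sp: "space N = space E" using sets_eq_imp_space_eq[OF Q] .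
  have "h \<in> borel_measurable N" using hm measurable_cong_sets[OF Q refl] by blast
  moreover have "AE x in N. norm (h x) \<le> B" using hb sp by (intro AE_I2) auto
  ultimately show ?thesis by (intro integrable_const_bound[where B=B])
qed

lemma bdd_integral:
  fixes h :: "'a \<Rightarrow> real"
  assumes P: "prob_space N" and Q: "sets N = sets E" and hm: "h \<in> borel_measurable E"
    and hb: "\<forall>y\<in>space E. \<bar>h y\<bar> \<le> B"
  shows "\<bar>integral\<^sup>L N h\<bar> \<le> B"
proof -
  interpret prob_space N by (rule P)
  have sp: "space N = space E" using sets_eq_imp_space_eq[OF Q] .
  have "\<bar>integral\<^sup>L N h\<bar> \<le> (\<integral>x. \<bar>h x\<bar> \<partial>N)" using integral_norm_bound[of N h] by simp
  also have "\<dots> \<le> (\<integral>x. B \<partial>N)"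
    using hb sp bdd_integrable[OF P Q hm hb] by (intro integral_mono) auto
  also have "\<dots> = B" by (simp add: prob_space)
  finally show ?thesis .
qed

lemma bdd_integral_mono:
  fixes h h' :: "'a \<Rightarrow> real"
  assumes P: "prob_space N" and Q: "sets N = sets E" and hm: "h \<in> borel_measurable E"
    and hb: "\<forall>y\<in>space E. \<bar>h y\<bar> \<le> B"
    and hm': "h' \<in> borel_measurable E"
    and hb': "\<forall>y\<in>space E. \<bar>h' y\<bar> \<le> B'"
    and le: "\<forall>y\<in>space E. h y \<le> h' y"
  shows "integral\<^sup>L N h \<le> integral\<^sup>L N h'"
proof -
  have sp: "space N = space E" using sets_eq_imp_space_eq[OF Q] .
  show ?thesis using bdd_integrable[OF P Q hm hb] bdd_integrable[OF P Q hm' hb'] le sp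
    by (intro integral_mono) auto
qed

lemma const_integral:
  assumes P: "prob_space N" shows "(\<integral>x. (c::real) \<partial>N) = c"
proof -
  interpret prob_space N by (rule P)
  show ?thesis by (simp add: prob_space)
qed

lemma Qone_good:
  fixes h :: "'a \<Rightarrow> real"
  assumes K: "M k \<in> S (k-1) \<rightarrow>\<^sub>M prob_algebra (S k)"
    and Gm: "G (k-1) \<in> borel_measurable (S (k-1))"
    and G01: "\<forall>x\<in>space (S (k-1)). 0 < G (k-1) x \<and> G (k-1) x < 1"
    and hm: "h \<in> borel_measurable (S k)" and hb: "\<forall>y\<in>space (S k). \<bar>h y\<bar> \<le> B"
  shows "Qone G M k h \<in> borel_measurable (S (k-1))"
    "\<forall>x\<in>space (S (k-1)). \<bar>Qone G M k h x\<bar> \<le> B"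
proof -
  have "(\<lambda>x. integral\<^sup>L (M k x) h) \<in> borel_measurable (S (k-1))"
    using measurable_compose[OF measurable_prob_algebraD[OF K] integral_measurable_subprob_algebra[OF hm]] .
  then show "Qone G M k h \<in> borel_measurable (S (k-1))"
    unfolding Qone_def[abs_def] using Gm by measurable
  show "\<forall>x\<in>space (S (k-1)). \<bar>Qone G M k h x\<bar> \<le> B"
  proof
    fix x assume x: "x \<in> space (S (k-1))"
    have I: "\<bar>integral\<^sup>L (M k x) h\<bar> \<le> B"
      using bdd_integral[OF kernel_x(1,2)[OF K x] hm hb] .
    have g: "0 < G (k-1) x" "G (k-1) x < 1" using G01 x by auto
    have "\<bar>Qone G M k h x\<bar> = G (k-1) x * \<bar>integral\<^sup>L (M k x) h\<bar>"
      using g by (simp add: Qone_def abs_mult)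
    also have "\<dots> \<le> 1 * \<bar>integral\<^sup>L (M k x) h\<bar>" using g by (intro mult_right_mono) auto
    finally show "\<bar>Qone G M k h x\<bar> \<le> B" using I by simp
  qed
qed

lemma Qone_mono:
  fixes h h' :: "'a \<Rightarrow> real"
  assumes K: "M k \<in> S (k-1) \<rightarrow>\<^sub>M prob_algebra (S k)"
    and G01: "\<forall>x\<in>space (S (k-1)). 0 < G (k-1) x"
    and hm: "h \<in> borel_measurable (S k)" and hb: "\<forall>y\<in>space (S k). \<bar>h y\<bar> \<le> B"
    and hm': "h' \<in> borel_measurable (S k)" and hb': "\<forall>y\<in>space (S k). \<bar>h' y\<bar> \<le> B'"
    and le: "\<forall>y\<in>space (S k). h y \<le> h' y"
    and x: "x \<in> space (S (k-1))"
  shows "Qone G M k h x \<le> Qone G M k h' x"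
  unfolding Qone_def using G01 x
  by (intro mult_left_mono bdd_integral_mono[OF kernel_x(1,2)[OF K x] hm hb hm' hb' le]) auto

lemma Qone_lower:
  fixes h :: "'a \<Rightarrow> real"
  assumes K: "M k \<in> S (k-1) \<rightarrow>\<^sub>M prob_algebra (S k)"
    and Gl: "\<forall>x\<in>space (S (k-1)). lG \<le> G (k-1) x" and lG: "0 \<le> lG"
    and hm: "h \<in> borel_measurable (S k)" and hb: "\<forall>y\<in>space (S k). \<bar>h y\<bar> \<le> B"
    and hl: "\<forall>y\<in>space (S k). l \<le> h y" and l: "0 \<le> l"
    and x: "x \<in> space (S (k-1))"
  shows "lG * l \<le> Qone G M k h x"
proof -
  have "(\<integral>y. l \<partial>M k x) \<le> integral\<^sup>L (M k x) h"
    using hl hb l by (intro bdd_integral_mono[OF kernel_x(1,2)[OF K x] _ _ hm hb, of _ "\<bar>l\<bar>"]) auto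
  then have "l \<le> integral\<^sup>L (M k x) h" using prob_space.prob_space[OF kernel_x(1)[OF K x]] by simp
  then show ?thesis unfolding Qone_def using Gl x lG l by (intro mult_mono) auto
qed

lemma Qone_homog: "Qone G M k (\<lambda>y. c * h y) = (\<lambda>x. c * Qone G M k h x)"
  by (auto simp: Qone_def)

lemma Qpn_below: "n \<le> p \<Longrightarrow> Qpn G M p n h = h"
  by (induction n) auto

lemma Qpn_step: "p \<le> n \<Longrightarrow> Qpn G M p (Suc n) h = Qpn G M p n (Qone G M (Suc n) h)"
  by simp

lemma Qpn_homog: "Qpn G M p n (\<lambda>y. c * h y) = (\<lambda>x. c * Qpn G M p n h x)"
proof (induction n arbitrary: h)
  case 0 then show ?case by simp
next
  case (Suc n)
  show ?case
  proof (cases "Suc n \<le> p")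
    case True then show ?thesis by simp
  next
    case False
    then have "Qpn G M p (Suc n) (\<lambda>y. c * h y) = Qpn G M p n (\<lambda>x. c * Qone G M (Suc n) h x)"
      by (simp add: Qone_homog)
    also have "\<dots> = (\<lambda>x. c * Qpn G M p n (Qone G M (Suc n) h) x)" by (rule Suc.IH)
    finally show ?thesis using False by simp
  qed
qed

lemma Qpn_good:
  fixes h :: "'a \<Rightarrow> real"
  assumes kernel: "\<And>n. n \<ge> 1 \<Longrightarrow> M n \<in> S (n - 1) \<rightarrow>\<^sub>M prob_algebra (S n)"
    and G_meas: "\<And>n. G n \<in> borel_measurable (S n)"
    and G_pos: "\<And>n x. x \<in> space (S n) \<Longrightarrow> 0 < G n x"
    and G_lt1: "\<And>n x. x \<in> space (S n) \<Longrightarrow> G n x < 1"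
  shows "p \<le> n \<Longrightarrow> h \<in> borel_measurable (S n) \<Longrightarrow> (\<forall>y\<in>space (S n). \<bar>h y\<bar> \<le> B) \<Longrightarrow>
    Qpn G M p n h \<in> borel_measurable (S p) \<and> (\<forall>x\<in>space (S p). \<bar>Qpn G M p n h x\<bar> \<le> B)"
proof (induction n arbitrary: h)
  case 0 then show ?case by simp
next
  case (Suc n)
  show ?case
  proof (cases "p = Suc n")
    case True then show ?thesis using Suc.prems by simp
  next
    case False
    then have pn: "p \<le> n" using Suc.prems by simp
    have K: "M (Suc n) \<in> S (Suc n - 1) \<rightarrow>\<^sub>M prob_algebra (S (Suc n))" using kernel[of "Suc n"] by simp
    have G01: "\<forall>x\<in>space (S (Suc n - 1)). 0 < G (Suc n - 1) x \<and> G (Suc n - 1) x < 1"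
      using G_pos G_lt1 by auto
    note Q = Qone_good[where M=M and k="Suc n" and S=S and G=G, OF K G_meas G01 Suc.prems(2,3)]
    show ?thesis using Suc.IH[OF pn] Q pn by simp
  qed
qed

lemma Qpn_mono:
  fixes h h' :: "'a \<Rightarrow> real"
  assumes kernel: "\<And>n. n \<ge> 1 \<Longrightarrow> M n \<in> S (n - 1) \<rightarrow>\<^sub>M prob_algebra (S n)"
    and G_meas: "\<And>n. G n \<in> borel_measurable (S n)"
    and G_pos: "\<And>n x. x \<in> space (S n) \<Longrightarrow> 0 < G n x"
    and G_lt1: "\<And>n x. x \<in> space (S n) \<Longrightarrow> G n x < 1"
  shows "p \<le> n \<Longrightarrow> h \<in> borel_measurable (S n) \<Longrightarrow> (\<forall>y\<in>space (S n). \<bar>h y\<bar> \<le> B) \<Longrightarrow>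
    h' \<in> borel_measurable (S n) \<Longrightarrow> (\<forall>y\<in>space (S n). \<bar>h' y\<bar> \<le> B') \<Longrightarrow>
    (\<forall>y\<in>space (S n). h y \<le> h' y) \<Longrightarrow>
    (\<forall>x\<in>space (S p). Qpn G M p n h x \<le> Qpn G M p n h' x)"
proof (induction n arbitrary: h h')
  case 0 then show ?case by simp
next
  case (Suc n)
  show ?case
  proof (cases "p = Suc n")
    case True then show ?thesis using Suc.prems by simp
  next
    case False
    then have pn: "p \<le> n" using Suc.prems by simp
    have K: "M (Suc n) \<in> S (Suc n - 1) \<rightarrow>\<^sub>M prob_algebra (S (Suc n))" using kernel[of "Suc n"] by simp
    have G01: "\<forall>x\<in>space (S (Suc n - 1)). 0 < G (Suc n - 1) x \<and> G (Suc n - 1) x < 1"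
      using G_pos G_lt1 by auto
    have G0: "\<forall>x\<in>space (S (Suc n - 1)). 0 < G (Suc n - 1) x" using G01 by auto
    note Q = Qone_good[where M=M and k="Suc n" and S=S and G=G, OF K G_meas G01 Suc.prems(2,3)]
    note Q' = Qone_good[where M=M and k="Suc n" and S=S and G=G, OF K G_meas G01 Suc.prems(4,5)]
    have le: "\<forall>x\<in>space (S n). Qone G M (Suc n) h x \<le> Qone G M (Suc n) h' x"
      using Qone_mono[where M=M and k="Suc n" and S=S and G=G, OF K G0 Suc.prems(2,3,4,5,6)] by simp
    show ?thesis using Suc.IH[OF pn _ _ _ _ le] Q Q' pn by simp
  qed
qed

lemma G_low:
  assumes G_pos: "\<And>n x. x \<in> space (S n) \<Longrightarrow> 0 < G n x"
    and G_ratio: "\<And>n. \<exists>C. \<forall>x\<in>space (S n). \<forall>y\<in>space (S n). G n x / G n y \<le> C"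
  shows "\<exists>l>0. \<forall>x\<in>space (S k). l \<le> (G k x :: real)"
proof (cases "space (S k) = {}")
  case True then show ?thesis by (intro exI[of _ 1]) auto
next
  case False
  then obtain y0 where y0: "y0 \<in> space (S k)" by auto
  obtain C where C: "\<forall>x\<in>space (S k). \<forall>y\<in>space (S k). G k x / G k y \<le> C" using G_ratio by blast
  have g0: "0 < G k y0" using G_pos y0 by auto
  have "G k y0 / G k y0 \<le> C" using C y0 by blast
  moreover have "G k y0 / G k y0 = 1" using g0 by simp
  ultimately have C1: "1 \<le> C" by linarith
  show ?thesis
  proof (intro exI[of _ "G k y0 / C"] conjI ballI)
    show "0 < G k y0 / C" using g0 C1 by simp
    fix x assume x: "x \<in> space (S k)"
    have gx: "0 < G k x" using G_pos x by auto
    have "G k y0 / G k x \<le> C" using C y0 x by auto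
    then have "G k y0 \<le> C * G k x" using gx by (simp add: divide_le_eq)
    then show "G k y0 / C \<le> G k x" using C1 by (simp add: divide_le_eq mult.commute)
  qed
qed

lemma Qpn_lower:
  fixes h :: "'a \<Rightarrow> real"
  assumes kernel: "\<And>n. n \<ge> 1 \<Longrightarrow> M n \<in> S (n - 1) \<rightarrow>\<^sub>M prob_algebra (S n)"
    and G_meas: "\<And>n. G n \<in> borel_measurable (S n)"
    and G_pos: "\<And>n x. x \<in> space (S n) \<Longrightarrow> 0 < G n x"
    and G_lt1: "\<And>n x. x \<in> space (S n) \<Longrightarrow> G n x < 1"
    and G_ratio: "\<And>n. \<exists>C. \<forall>x\<in>space (S n). \<forall>y\<in>space (S n). G n x / G n y \<le> C"
  shows "p \<le> n \<Longrightarrow> h \<in> borel_measurable (S n) \<Longrightarrow> 0 < l \<Longrightarrow>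
    (\<forall>y\<in>space (S n). l \<le> h y \<and> h y \<le> 1) \<Longrightarrow>
    \<exists>l'>0. \<forall>x\<in>space (S p). l' \<le> Qpn G M p n h x"
proof (induction n arbitrary: h l)
  case 0 then show ?case by auto
next
  case (Suc n)
  show ?case
  proof (cases "p = Suc n")
    case True then show ?thesis using Suc.prems by auto
  next
    case False
    then have pn: "p \<le> n" using Suc.prems by simp
    have K: "M (Suc n) \<in> S (Suc n - 1) \<rightarrow>\<^sub>M prob_algebra (S (Suc n))" using kernel[of "Suc n"] by simp
    have G01: "\<forall>x\<in>space (S (Suc n - 1)). 0 < G (Suc n - 1) x \<and> G (Suc n - 1) x < 1"
      using G_pos G_lt1 by auto
    have hb: "\<forall>y\<in>space (S (Suc n)). \<bar>h y\<bar> \<le> 1" using Suc.prems by fastforce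
    note Q = Qone_good[where M=M and k="Suc n" and S=S and G=G, OF K G_meas G01 Suc.prems(2) hb]
    obtain lG where lG: "lG > 0" "\<forall>x\<in>space (S n). lG \<le> G n x"
      using G_low[of S G, OF G_pos G_ratio] by blast
    have low: "\<forall>x\<in>space (S n). lG * l \<le> Qone G M (Suc n) h x"
      using Qone_lower[where M=M and k="Suc n" and S=S and G=G, OF K _ _ Suc.prems(2) hb, of lG l] lG Suc.prems by simp
    have "\<forall>x\<in>space (S n). lG * l \<le> Qone G M (Suc n) h x \<and> Qone G M (Suc n) h x \<le> 1"
      using low Q by fastforce
    from Suc.IH[OF pn _ _ this] Q lG Suc.prems(3)
    show ?thesis using pn by simp
  qed
qed

lemma arith_final:
  fixes a e qq bb :: real
  assumes qq: "1 \<le> qq" and bb: "0 < bb" and e: "1 / qq \<le> e"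
  shows "\<bar>a / e - 2 * qq * bb * (a / (2 * qq * bb) - 0)\<bar>
     \<le> 4 * qq ^ 3 * bb * \<bar>e / qq - 1 / qq\<bar> * \<bar>a / (2 * qq * bb) - 0 / (2 * qq * bb)\<bar>"
proof -
  have e0: "0 < e" using e qq by (smt (verit) divide_pos_pos)
  have ie: "1 / e \<le> qq" using e e0 qq by (simp add: divide_le_eq field_simps)
  have "a / e - 2 * qq * bb * (a / (2 * qq * bb) - 0) = a * (1 - e) * (1 / e)"
    using e0 qq bb by (simp add: field_simps)
  then have "\<bar>a / e - 2 * qq * bb * (a / (2 * qq * bb) - 0)\<bar> = \<bar>a\<bar> * \<bar>e - 1\<bar> * (1 / e)"
    using e0 by (simp add: abs_mult abs_minus_commute)
  also have "\<dots> \<le> \<bar>a\<bar> * \<bar>e - 1\<bar> * qq" using ie by (intro mult_left_mono) auto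
  also have "\<dots> \<le> 2 * qq * \<bar>a\<bar> * \<bar>e - 1\<bar>" using qq by simp
  also have "2 * qq * \<bar>a\<bar> * \<bar>e - 1\<bar> = 4 * qq ^ 3 * bb * \<bar>e / qq - 1 / qq\<bar> * \<bar>a / (2 * qq * bb) - 0 / (2 * qq * bb)\<bar>"
  proof -
    have "\<bar>e / qq - 1 / qq\<bar> = \<bar>e - 1\<bar> / qq" using qq by (simp add: diff_divide_distrib[symmetric])
    moreover have "\<bar>a / (2 * qq * bb) - 0 / (2 * qq * bb)\<bar> = \<bar>a\<bar> / (2 * qq * bb)" using qq bb by simp
    ultimately show ?thesis using qq bb by (simp add: field_simps power3_eq_cube)
  qed
  finally show ?thesis .
qed

lemma osc_upper:
  assumes B: "\<forall>x\<in>space E. \<forall>y\<in>space E. \<bar>h x - h y\<bar> \<le> B" and x: "x \<in> space E" and y: "y \<in> space E"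
  shows "\<bar>h x - h y\<bar> \<le> osc E h"
  unfolding osc_def using B x y by (intro cSup_upper) (auto intro!: bdd_aboveI[of _ B])

lemma osc_least:
  assumes B: "\<forall>x\<in>space E. \<forall>y\<in>space E. \<bar>h x - h y\<bar> \<le> B" and ne: "space E \<noteq> {}"
  shows "osc E h \<le> B"
  unfolding osc_def using B ne by (intro cSup_least) force+

lemma osc1_bound:
  assumes "f \<in> Osc1 E"
  shows "\<exists>c. \<forall>y\<in>space E. c - 1 \<le> f y \<and> f y \<le> c + 1 \<and> \<bar>f y\<bar> \<le> \<bar>c\<bar> + 1"
proof (cases "space E = {}")
  case True then show ?thesis by auto
next
  case False
  then obtain z where z: "z \<in> space E" by auto
  show ?thesis using assms z unfolding Osc1_def
    by (intro exI[of _ "f z"]) (smt (verit, best) mem_Collect_eq)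
qed

theorem lemma4p3:
  fixes S :: "nat \<Rightarrow> 'a measure"
    and M :: "nat \<Rightarrow> 'a \<Rightarrow> 'a measure"
    and G :: "nat \<Rightarrow> 'a \<Rightarrow> real"
  assumes kernel: "\<And>n. n \<ge> 1 \<Longrightarrow> M n \<in> S (n - 1) \<rightarrow>\<^sub>M prob_algebra (S n)"
    and G_meas: "\<And>n. G n \<in> borel_measurable (S n)"
    and G_pos: "\<And>n x. x \<in> space (S n) \<Longrightarrow> 0 < G n x"
    and G_lt1: "\<And>n x. x \<in> space (S n) \<Longrightarrow> G n x < 1"
    and G_ratio: "\<And>n. \<exists>C. \<forall>x\<in>space (S n). \<forall>y\<in>space (S n). G n x / G n y \<le> C"
    and pn: "p \<le> n"
    and eta: "\<eta> \<in> probs (S p)"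
    and f: "f \<in> Osc1 (S n)"
  shows "\<exists>U V W. U \<in> Osc1 (S p) \<and> V \<in> Osc1 (S p) \<and> W \<in> Osc1 (S p) \<and>
    (\<forall>\<mu>\<in>probs (S p).
      \<bar>(Phi G M p n \<mu> f - Phi G M p n \<eta> f)
        - 2 * qpn S G M p n * beta S G M p n * ((\<integral>x. U x \<partial>\<mu>) - (\<integral>x. U x \<partial>\<eta>))\<bar>
      \<le> 4 * (qpn S G M p n) ^ 3 * beta S G M p n
          * \<bar>(\<integral>x. V x \<partial>\<mu>) - (\<integral>x. V x \<partial>\<eta>)\<bar>
          * \<bar>(\<integral>x. W x \<partial>\<mu>) - (\<integral>x. W x \<partial>\<eta>)\<bar>)"
proof -
  define Q1 where "Q1 = Qpn G M p n (\<lambda>_. 1)"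
  define Qf where "Qf = Qpn G M p n f"
  define g where "g = Ppn G M p n f"
  define qq where "qq = qpn S G M p n"
  define bb where "bb = beta S G M p n"
  note good = Qpn_good[where M=M and S=S and G=G, OF kernel G_meas G_pos G_lt1 pn]
  note mono = Qpn_mono[where M=M and S=S and G=G, OF kernel G_meas G_pos G_lt1 pn]
  have eta_ps: "prob_space \<eta>" and eta_sets: "sets \<eta> = sets (S p)" using eta by (auto simp: probs_def)
  have Sp_ne: "space (S p) \<noteq> {}"
    using prob_space.not_empty[OF eta_ps] sets_eq_imp_space_eq[OF eta_sets] by simp
  have integ: "integrable \<mu> h" if "\<mu> \<in> probs (S p)" "h \<in> borel_measurable (S p)"
    "\<forall>y\<in>space (S p). \<bar>h y\<bar> \<le> B" for \<mu> and h :: "'a \<Rightarrow> real" and B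
    using bdd_integrable[of \<mu> "S p" h B] that by (auto simp: probs_def)
  have imono: "integral\<^sup>L \<mu> h \<le> integral\<^sup>L \<mu> h'" if "\<mu> \<in> probs (S p)" "h \<in> borel_measurable (S p)"
    "\<forall>y\<in>space (S p). \<bar>h y\<bar> \<le> B" "h' \<in> borel_measurable (S p)"
    "\<forall>y\<in>space (S p). \<bar>h' y\<bar> \<le> B'" "\<forall>y\<in>space (S p). h y \<le> h' y" for \<mu> and h h' :: "'a \<Rightarrow> real" and B B'
    using bdd_integral_mono[of \<mu> "S p" h B h' B'] that by (auto simp: probs_def)
  have iconst: "(\<integral>x. c \<partial>\<mu>) = c" if "\<mu> \<in> probs (S p)" for \<mu> and c :: real
    using const_integral[of \<mu> c] that by (auto simp: probs_def)
  have psp: "Sigma_Algebra.measure \<mu> (space \<mu>) = 1" if "\<mu> \<in> probs (S p)" for \<mu>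
    using prob_space.prob_space[of \<mu>] that by (auto simp: probs_def)
  have ibound: "\<bar>integral\<^sup>L \<mu> h\<bar> \<le> B" if "\<mu> \<in> probs (S p)" "h \<in> borel_measurable (S p)"
    "\<forall>y\<in>space (S p). \<bar>h y\<bar> \<le> B" for \<mu> and h :: "'a \<Rightarrow> real" and B
    using bdd_integral[of \<mu> "S p" h B] that by (auto simp: probs_def)

  have Q1m: "Q1 \<in> borel_measurable (S p)" and Q1b: "\<forall>x\<in>space (S p). \<bar>Q1 x\<bar> \<le> 1"
    using good[of "\<lambda>_. 1" 1] unfolding Q1_def by auto
  obtain lo where lo: "lo > 0" "\<forall>x\<in>space (S p). lo \<le> Q1 x"
    using Qpn_lower[where M=M and S=S and G=G, OF kernel G_meas G_pos G_lt1 G_ratio pn, of "\<lambda>_. 1" 1] unfolding Q1_def by auto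
  have Q1pos: "0 < Q1 x" if "x \<in> space (S p)" for x using lo that by force

  have Prange: "\<exists>c. \<forall>x\<in>space (S p). c - 1 \<le> Ppn G M p n f' x \<and> Ppn G M p n f' x \<le> c + 1"
    if f': "f' \<in> Osc1 (S n)" for f'
  proof -
    obtain c where c: "\<forall>y\<in>space (S n). c - 1 \<le> f' y \<and> f' y \<le> c + 1 \<and> \<bar>f' y\<bar> \<le> \<bar>c\<bar> + 1"
      using osc1_bound[OF f'] by blast
    have fm: "f' \<in> borel_measurable (S n)" using f' by (simp add: Osc1_def)
    have hom: "Qpn G M p n (\<lambda>y. d * 1) = (\<lambda>x. d * Q1 x)" for d
      unfolding Q1_def by (rule Qpn_homog)
    have lowr: "\<forall>x\<in>space (S p). Qpn G M p n (\<lambda>y. (c - 1) * 1) x \<le> Qpn G M p n f' x"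
      using c by (intro mono[of _ "\<bar>c - 1\<bar>" _ "\<bar>c\<bar> + 1"] fm) auto
    have upr: "\<forall>x\<in>space (S p). Qpn G M p n f' x \<le> Qpn G M p n (\<lambda>y. (c + 1) * 1) x"
      using c by (intro mono[of _ "\<bar>c\<bar> + 1" _ "\<bar>c + 1\<bar>"] fm) auto
    show ?thesis
    proof (intro exI[of _ c] ballI conjI)
      fix x assume x: "x \<in> space (S p)"
      have q: "0 < Q1 x" using Q1pos x .
      have "(c - 1) * Q1 x \<le> Qpn G M p n f' x" using lowr x hom[of "c - 1"] by simp
      then show "c - 1 \<le> Ppn G M p n f' x" unfolding Ppn_def Q1_def[symmetric] using q
        by (simp add: pos_le_divide_eq)
      have "Qpn G M p n f' x \<le> (c + 1) * Q1 x" using upr x hom[of "c + 1"] by simp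
      then show "Ppn G M p n f' x \<le> c + 1" unfolding Ppn_def Q1_def[symmetric] using q
        by (simp add: pos_divide_le_eq)
    qed
  qed
  have oscP: "osc (S p) (Ppn G M p n f') \<le> 2" if f1: "f' \<in> Osc1 (S n)" for f'
  proof -
    obtain c where c: "\<forall>x\<in>space (S p). c - 1 \<le> Ppn G M p n f' x \<and> Ppn G M p n f' x \<le> c + 1"
      using Prange[OF f1] by blast
    show ?thesis
    proof (rule osc_least[OF _ Sp_ne], intro ballI)
      fix x y assume xy: "x \<in> space (S p)" "y \<in> space (S p)"
      have "c - 1 \<le> Ppn G M p n f' x" "Ppn G M p n f' x \<le> c + 1"
        "c - 1 \<le> Ppn G M p n f' y" "Ppn G M p n f' y \<le> c + 1" using c xy by auto
      then show "\<bar>Ppn G M p n f' x - Ppn G M p n f' y\<bar> \<le> 2" by linarith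
    qed
  qed
  have gosc: "\<forall>x\<in>space (S p). \<forall>y\<in>space (S p). \<bar>g x - g y\<bar> \<le> bb"
  proof (intro ballI)
    fix x y assume xy: "x \<in> space (S p)" "y \<in> space (S p)"
    obtain c where c: "\<forall>x\<in>space (S p). c - 1 \<le> g x \<and> g x \<le> c + 1"
      using Prange[OF f] unfolding g_def by blast
    have c2: "\<forall>x\<in>space (S p). \<forall>y\<in>space (S p). \<bar>g x - g y\<bar> \<le> 2"
    proof (intro ballI)
      fix x y assume xy: "x \<in> space (S p)" "y \<in> space (S p)"
      have "c - 1 \<le> g x" "g x \<le> c + 1" "c - 1 \<le> g y" "g y \<le> c + 1" using c xy by auto
      then show "\<bar>g x - g y\<bar> \<le> 2" by linarith
    qed
    have "\<bar>g x - g y\<bar> \<le> osc (S p) g" using osc_upper[OF c2 xy] .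
    also have "osc (S p) g \<le> bb" unfolding bb_def beta_def g_def
      using oscP f by (intro cSup_upper) (auto intro!: bdd_aboveI[of _ 2])
    finally show "\<bar>g x - g y\<bar> \<le> bb" .
  qed
  obtain x0 where x0: "x0 \<in> space (S p)" using Sp_ne by auto
  have bb0: "0 \<le> bb" using gosc x0 by force

  have qq_up: "Q1 x / Q1 y \<le> qq" if "x \<in> space (S p)" "y \<in> space (S p)" for x y
  proof -
    have b: "Q1 x' / Q1 y' \<le> 1 / lo" if "x' \<in> space (S p)" "y' \<in> space (S p)" for x' y'
    proof -
      have "Q1 x' \<le> 1" "lo \<le> Q1 y'" "0 < Q1 x'" using Q1b lo Q1pos that by force+
      then show ?thesis using lo(1) by (simp add: frac_le)
    qed
    show ?thesis unfolding qq_def qpn_def Q1_def[symmetric]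
      using that b by (intro cSup_upper) (auto intro!: bdd_aboveI[of _ "1/lo"])
  qed
  have qq1: "1 \<le> qq" using qq_up[OF x0 x0] Q1pos[OF x0] by simp
  have qq_mul: "Q1 x \<le> qq * Q1 y" if "x \<in> space (S p)" "y \<in> space (S p)" for x y
    using qq_up[OF that] Q1pos[OF that(2)] by (simp add: divide_le_eq)

  have Qfm: "Qf \<in> borel_measurable (S p)" and "\<exists>B. \<forall>x\<in>space (S p). \<bar>Qf x\<bar> \<le> B"
  proof -
    obtain c where c: "\<forall>y\<in>space (S n). c - 1 \<le> f y \<and> f y \<le> c + 1 \<and> \<bar>f y\<bar> \<le> \<bar>c\<bar> + 1"
      using osc1_bound[OF f] by blast
    have fm: "f \<in> borel_measurable (S n)" using f by (simp add: Osc1_def)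
    have "Qf \<in> borel_measurable (S p) \<and> (\<forall>x\<in>space (S p). \<bar>Qf x\<bar> \<le> \<bar>c\<bar> + 1)"
      using good[of f "\<bar>c\<bar> + 1"] fm c unfolding Qf_def by auto
    then show "Qf \<in> borel_measurable (S p)" "\<exists>B. \<forall>x\<in>space (S p). \<bar>Qf x\<bar> \<le> B" by auto
  qed
  then obtain Bf where Bf: "\<forall>x\<in>space (S p). \<bar>Qf x\<bar> \<le> Bf" by blast
  have Qfg: "Qf x = Q1 x * g x" if "x \<in> space (S p)" for x
    using Q1pos[OF that] unfolding g_def Ppn_def Qf_def Q1_def by simp

  define D where "D = (\<lambda>\<mu>. \<integral>x. Q1 x \<partial>\<mu>)"
  define N where "N = (\<lambda>\<mu>. \<integral>x. Qf x \<partial>\<mu>)"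
  have Dlo: "lo \<le> D \<mu>" if "\<mu> \<in> probs (S p)" for \<mu>
  proof -
    have "(\<integral>x. lo \<partial>\<mu>) \<le> D \<mu>" unfolding D_def
      using lo Q1b by (intro imono[OF that _ _ Q1m Q1b, of _ "\<bar>lo\<bar>"]) auto
    then show ?thesis using psp[OF that] by simp
  qed
  have Dpos: "0 < D \<mu>" if "\<mu> \<in> probs (S p)" for \<mu> using Dlo[OF that] lo by simp
  have Deta_up: "D \<eta> \<le> qq * Q1 x" if x: "x \<in> space (S p)" for x
  proof -
    have "D \<eta> \<le> (\<integral>y. qq * Q1 x \<partial>\<eta>)" unfolding D_def
      using qq_mul x by (intro imono[OF eta _ Q1b _ _, of _ "\<bar>qq * Q1 x\<bar>"]) (auto intro: Q1m)
    then show ?thesis using psp[OF eta] by simp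
  qed
  have Deta_low: "Q1 x \<le> qq * D \<eta>" if x: "x \<in> space (S p)" for x
  proof -
    have "(\<integral>y. Q1 x / qq \<partial>\<eta>) \<le> D \<eta>" unfolding D_def
      using qq_mul x qq1 by (intro imono[OF eta _ _ Q1m Q1b, of _ "\<bar>Q1 x / qq\<bar>"])
        (auto simp: divide_le_eq mult.commute)
    then show ?thesis using psp[OF eta] qq1 by (simp add: divide_le_eq mult.commute)
  qed
  define c where "c = N \<eta> / D \<eta>"
  have De: "0 < D \<eta>" using Dpos[OF eta] .
  have gc: "\<bar>g x - c\<bar> \<le> bb" if x: "x \<in> space (S p)" for x
  proof -
    have gm: "(\<lambda>y. d * Q1 y) \<in> borel_measurable (S p)" for d using Q1m by measurable
    have gb: "\<forall>y\<in>space (S p). \<bar>d * Q1 y\<bar> \<le> \<bar>d\<bar>" for d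
      using Q1b by (auto simp: abs_mult intro: mult_left_le)
    have "N \<eta> \<le> (\<integral>y. (g x + bb) * Q1 y \<partial>\<eta>)" unfolding N_def
    proof (intro imono[OF eta Qfm Bf gm gb] ballI)
      fix y assume y: "y \<in> space (S p)"
      have "g y \<le> g x + bb" using gosc x y by force
      then show "Qf y \<le> (g x + bb) * Q1 y" using Qfg[OF y] Q1pos[OF y]
        by (simp add: mult.commute mult_left_mono)
    qed
    then have u: "N \<eta> \<le> (g x + bb) * D \<eta>" unfolding D_def by simp
    have "(\<integral>y. (g x - bb) * Q1 y \<partial>\<eta>) \<le> N \<eta>" unfolding N_def
    proof (intro imono[OF eta gm gb Qfm Bf] ballI)
      fix y assume y: "y \<in> space (S p)"
      have "g x - bb \<le> g y" using gosc x y by force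
      then show "(g x - bb) * Q1 y \<le> Qf y" using Qfg[OF y] Q1pos[OF y]
        by (simp add: mult.commute mult_left_mono)
    qed
    then have l: "(g x - bb) * D \<eta> \<le> N \<eta>" unfolding D_def by simp
    have "c \<le> g x + bb" using u De unfolding c_def by (simp add: divide_le_eq)
    moreover have "g x - bb \<le> c" using l De unfolding c_def by (simp add: le_divide_eq)
    ultimately show ?thesis by linarith
  qed

  define H where "H = (\<lambda>x. (Qf x - c * Q1 x) / D \<eta>)"
  define Ge where "Ge = (\<lambda>x. Q1 x / D \<eta>)"
  define U where "U = (\<lambda>x. H x / (2 * qq * bb))"
  define V where "V = (\<lambda>x. Ge x / qq)"
  have Hm: "H \<in> borel_measurable (S p)" unfolding H_def using Qfm Q1m by measurable
  have Gem: "Ge \<in> borel_measurable (S p)" unfolding Ge_def using Q1m by measurable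
  have Ge_pos: "0 < Ge x" and Ge_up: "Ge x \<le> qq" and Ge_low: "1 / qq \<le> Ge x"
    if x: "x \<in> space (S p)" for x
  proof -
    show "0 < Ge x" unfolding Ge_def using Q1pos[OF x] De by simp
    show "Ge x \<le> qq" unfolding Ge_def using Deta_low[OF x] De by (simp add: divide_le_eq)
    show "1 / qq \<le> Ge x" unfolding Ge_def using Deta_up[OF x] De qq1
      by (simp add: divide_le_eq le_divide_eq mult.commute)
  qed
  have Hb: "\<bar>H x\<bar> \<le> qq * bb" if x: "x \<in> space (S p)" for x
  proof -
    have "H x = Ge x * (g x - c)" unfolding H_def Ge_def using Qfg[OF x]
      by (simp add: field_simps)
    then have "\<bar>H x\<bar> = Ge x * \<bar>g x - c\<bar>" using Ge_pos[OF x] by (simp add: abs_mult)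
    also have "\<dots> \<le> qq * bb" using Ge_up[OF x] Ge_pos[OF x] gc[OF x] bb0
      by (intro mult_mono) auto
    finally show ?thesis .
  qed
  have Gb: "\<forall>x\<in>space (S p). \<bar>Ge x\<bar> \<le> qq" using Ge_pos Ge_up by force
  have Hb': "\<forall>x\<in>space (S p). \<bar>H x\<bar> \<le> qq * bb" using Hb by blast
  have Uosc: "U \<in> Osc1 (S p)"
  proof -
    have "U \<in> borel_measurable (S p)" unfolding U_def using Hm by measurable
    moreover have "\<bar>U x - U y\<bar> \<le> 1" if "x \<in> space (S p)" "y \<in> space (S p)" for x y
    proof (cases "bb = 0")
      case True then show ?thesis unfolding U_def by simp
    next
      case False
      then have pos: "0 < 2 * qq * bb" using bb0 qq1 by simp
      have "\<bar>H x - H y\<bar> \<le> 2 * qq * bb" using Hb[OF that(1)] Hb[OF that(2)] by linarith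
      then show ?thesis unfolding U_def using pos
        by (simp add: diff_divide_distrib[symmetric] divide_le_eq)
    qed
    ultimately show ?thesis unfolding Osc1_def by blast
  qed
  have Vosc: "V \<in> Osc1 (S p)"
  proof -
    have "V \<in> borel_measurable (S p)" unfolding V_def using Gem by measurable
    moreover have "\<bar>V x - V y\<bar> \<le> 1" if "x \<in> space (S p)" "y \<in> space (S p)" for x y
    proof -
      have "0 < V x" "V x \<le> 1" "0 < V y" "V y \<le> 1" unfolding V_def
        using Ge_pos Ge_up that qq1 by (auto simp: divide_le_eq)
      then show ?thesis by linarith
    qed
    ultimately show ?thesis unfolding Osc1_def by blast
  qed
  have ALL: "\<forall>\<mu>\<in>probs (S p).
      \<bar>(Phi G M p n \<mu> f - Phi G M p n \<eta> f)
        - 2 * qpn S G M p n * beta S G M p n * ((\<integral>x. U x \<partial>\<mu>) - (\<integral>x. U x \<partial>\<eta>))\<bar>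
      \<le> 4 * (qpn S G M p n) ^ 3 * beta S G M p n
          * \<bar>(\<integral>x. V x \<partial>\<mu>) - (\<integral>x. V x \<partial>\<eta>)\<bar>
          * \<bar>(\<integral>x. U x \<partial>\<mu>) - (\<integral>x. U x \<partial>\<eta>)\<bar>"
  proof
    fix \<mu> assume mu: "\<mu> \<in> probs (S p)"
    have intH: "(\<integral>x. H x \<partial>\<nu>) = (N \<nu> - c * D \<nu>) / D \<eta>" if nu: "\<nu> \<in> probs (S p)" for \<nu>
    proof -
      have i1: "integrable \<nu> Qf" using integ[OF nu Qfm Bf] .
      have i2: "integrable \<nu> (\<lambda>x. c * Q1 x)" using integ[OF nu Q1m Q1b] by simp
      show ?thesis unfolding H_def N_def D_def
        by (simp add: Bochner_Integration.integral_diff[OF i1 i2])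
    qed
    have intGe: "(\<integral>x. Ge x \<partial>\<nu>) = D \<nu> / D \<eta>" for \<nu> unfolding Ge_def D_def by simp
    define a where "a = (\<integral>x. H x \<partial>\<mu>)"
    define e where "e = (\<integral>x. Ge x \<partial>\<mu>)"
    have aeta: "(\<integral>x. H x \<partial>\<eta>) = 0" using intH[OF eta] De unfolding c_def by simp
    have eeta: "(\<integral>x. Ge x \<partial>\<eta>) = 1" using intGe[of \<eta>] De by simp
    have Dm: "0 < D \<mu>" using Dpos[OF mu] .
    have phim: "Phi G M p n \<mu> f = N \<mu> / D \<mu>" unfolding Phi_def N_def D_def Qf_def Q1_def ..
    have phie: "Phi G M p n \<eta> f = c" unfolding Phi_def c_def N_def D_def Qf_def Q1_def ..
    have diff: "N \<mu> / D \<mu> - c = a / e"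
      unfolding a_def e_def intH[OF mu] intGe using Dm De by (simp add: field_simps)
    have e_low: "1 / qq \<le> e"
    proof -
      have "(\<integral>x. 1 / qq \<partial>\<mu>) \<le> e" unfolding e_def
        using Ge_low by (intro imono[OF mu _ _ Gem Gb, of _ "\<bar>1/qq\<bar>"]) auto
      then show ?thesis using psp[OF mu] by simp
    qed
    have intU: "(\<integral>x. U x \<partial>\<nu>) = (\<integral>x. H x \<partial>\<nu>) / (2 * qq * bb)" for \<nu>
      unfolding U_def by simp
    have intV: "(\<integral>x. V x \<partial>\<nu>) = (\<integral>x. Ge x \<partial>\<nu>) / qq" for \<nu>
      unfolding V_def by simp
    show "\<bar>(Phi G M p n \<mu> f - Phi G M p n \<eta> f)
        - 2 * qpn S G M p n * beta S G M p n * ((\<integral>x. U x \<partial>\<mu>) - (\<integral>x. U x \<partial>\<eta>))\<bar>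
      \<le> 4 * (qpn S G M p n) ^ 3 * beta S G M p n
          * \<bar>(\<integral>x. V x \<partial>\<mu>) - (\<integral>x. V x \<partial>\<eta>)\<bar>
          * \<bar>(\<integral>x. U x \<partial>\<mu>) - (\<integral>x. U x \<partial>\<eta>)\<bar>"
    proof (cases "bb = 0")
      case True
      have "\<bar>a\<bar> \<le> qq * bb" unfolding a_def using ibound[OF mu Hm Hb'] .
      then have "a = 0" using True by simp
      then show ?thesis unfolding qq_def[symmetric] bb_def[symmetric] phim phie diff intU intV aeta eeta a_def[symmetric] e_def[symmetric] using True by simp
    next
      case False
      then have "0 < bb" using bb0 by simp
      from arith_final[OF qq1 this e_low, of a] show ?thesis unfolding qq_def[symmetric] bb_def[symmetric] phim phie diff intU intV aeta eeta a_def[symmetric] e_def[symmetric] by simp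
    qed
  qed
  show ?thesis using Uosc Vosc ALL by blast
qed

end
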